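(* Let $H$ be a Heyting algebra and $f,g:H\to H$ monotone polynomials such that $\mu.f=f^m(\bot)$ and $\mu.g=g^n(\bot)$ for some $m,n\ge0$. Then $\mu.(f\wedge g)=(f\wedge g)^{m+n-1}(\bot)$, with the convention $k^{j}(\bot)=\bot$ for $j<0$.
   Context: A function $f:H\to H$ is a polynomial if there exist an IPC formula $\phi$, a variable $x$ and a valuation $v$ in $H$ of the other variables of $\phi$ such that $f(h)=[\![\phi]\!]_{(v,h/x)}$ for all $h$. $f\wedge g$ is the pointwise meet; $\mu$ denotes least fixed point. *)

theory Defs
  imports Main
begin

class heyting_algebra = bounded_lattice +
  fixes himp :: "'a \<Rightarrow> 'a \<Rightarrow> 'a"
  assumes himp_residuation: "inf x y \<le> z \<longleftrightarrow> x \<le> himp y z"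

datatype ipc_form =
    PVar nat
  | PBot
  | PTop
  | PAnd ipc_form ipc_form
  | POr ipc_form ipc_form
  | PImp ipc_form ipc_form

primrec ipc_eval :: "(nat \<Rightarrow> 'a::heyting_algebra) \<Rightarrow> ipc_form \<Rightarrow> 'a" where
  "ipc_eval v (PVar i) = v i"
| "ipc_eval v PBot = bot"
| "ipc_eval v PTop = top"
| "ipc_eval v (PAnd a b) = inf (ipc_eval v a) (ipc_eval v b)"
| "ipc_eval v (POr a b) = sup (ipc_eval v a) (ipc_eval v b)"
| "ipc_eval v (PImp a b) = himp (ipc_eval v a) (ipc_eval v b)"

definition polynomial :: "('a::heyting_algebra \<Rightarrow> 'a) \<Rightarrow> bool" where
  "polynomial f \<longleftrightarrow> (\<exists>\<phi> x v. \<forall>h. f h = ipc_eval (v(x := h)) \<phi>)"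

text \<open>a is the least fixed point of f (H need not be complete).\<close>
definition is_least_fixpoint :: "('a::order \<Rightarrow> 'a) \<Rightarrow> 'a \<Rightarrow> bool" where
  "is_least_fixpoint f a \<longleftrightarrow> f a = a \<and> (\<forall>b. f b = b \<longrightarrow> a \<le> b)"

end

theory Submission
  imports Defs
begin

lemma ha_mp: "inf (himp y z) y \<le> (z::'a::heyting_algebra)"
  using himp_residuation[of "himp y z" y z] by simp

lemma ha_distrib: "inf (a::'a::heyting_algebra) (sup p q) \<le> sup (inf a p) (inf a q)"
proof -
  have "inf p a \<le> sup (inf a p) (inf a q)" by (simp add: inf_commute)
  then have 1: "p \<le> himp a (sup (inf a p) (inf a q))" using himp_residuation by blast
  have "inf q a \<le> sup (inf a p) (inf a q)" by (simp add: inf_commute)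
  then have 2: "q \<le> himp a (sup (inf a p) (inf a q))" using himp_residuation by blast
  from 1 2 have "sup p q \<le> himp a (sup (inf a p) (inf a q))" by simp
  then have "inf (sup p q) a \<le> sup (inf a p) (inf a q)" using himp_residuation by blast
  then show ?thesis by (simp add: inf_commute)
qed

lemma ha_sup_red: "inf (a::'a::heyting_algebra) (sup p q) = inf a (sup (inf a p) (inf a q))"
proof (rule antisym)
  show "inf a (sup p q) \<le> inf a (sup (inf a p) (inf a q))" using ha_distrib[of a p q] by simp
  have "sup (inf a p) (inf a q) \<le> sup p q" by (auto intro: le_supI1 le_supI2)
  then show "inf a (sup (inf a p) (inf a q)) \<le> inf a (sup p q)" by (auto intro: le_infI2)
qed

lemma ha_imp_red: "inf (a::'a::heyting_algebra) (himp p q) = inf a (himp (inf a p) (inf a q))"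
proof (rule antisym)
  have "inf (inf a (himp p q)) (inf a p) \<le> inf a q"
  proof (rule le_infI)
    show "inf (inf a (himp p q)) (inf a p) \<le> a" by (auto intro: le_infI1)
    have "inf (inf a (himp p q)) (inf a p) \<le> inf (himp p q) p"
      by (auto intro: le_infI1 le_infI2)
    then show "inf (inf a (himp p q)) (inf a p) \<le> q" using ha_mp[of p q] by (rule order_trans)
  qed
  then have "inf a (himp p q) \<le> himp (inf a p) (inf a q)" using himp_residuation by blast
  then show "inf a (himp p q) \<le> inf a (himp (inf a p) (inf a q))" by simp
next
  have "inf (inf a (himp (inf a p) (inf a q))) p \<le> q"
  proof -
    have "inf (inf a (himp (inf a p) (inf a q))) p \<le> inf (himp (inf a p) (inf a q)) (inf a p)"
      by (auto intro: le_infI1 le_infI2)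
    also have "\<dots> \<le> inf a q" by (rule ha_mp)
    also have "\<dots> \<le> q" by simp
    finally show ?thesis .
  qed
  then have "inf a (himp (inf a p) (inf a q)) \<le> himp p q" using himp_residuation by blast
  then show "inf a (himp (inf a p) (inf a q)) \<le> inf a (himp p q)" by simp
qed

lemma compat_eval:
  fixes a h1 h2 :: "'a::heyting_algebra"
  assumes "inf a h1 = inf a h2"
  shows "inf a (ipc_eval (v(x := h1)) \<phi>) = inf a (ipc_eval (v(x := h2)) \<phi>)"
proof (induction \<phi>)
  case (PVar i) then show ?case using assms by auto
next
  case (PAnd p q)
  have e: "\<And>p q. inf a (inf p q) = inf (inf a p) (inf a q)" by (simp add: inf_aci)
  show ?case using PAnd by (simp only: ipc_eval.simps e)
next
  case (POr p q)
  let ?P1 = "ipc_eval (v(x := h1)) p" and ?P2 = "ipc_eval (v(x := h2)) p"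
  let ?Q1 = "ipc_eval (v(x := h1)) q" and ?Q2 = "ipc_eval (v(x := h2)) q"
  have "inf a (sup ?P1 ?Q1) = inf a (sup (inf a ?P1) (inf a ?Q1))" by (rule ha_sup_red)
  also have "\<dots> = inf a (sup (inf a ?P2) (inf a ?Q2))" by (simp only: POr.IH)
  also have "\<dots> = inf a (sup ?P2 ?Q2)" by (rule ha_sup_red[symmetric])
  finally show ?case by (simp only: ipc_eval.simps)
next
  case (PImp p q)
  let ?P1 = "ipc_eval (v(x := h1)) p" and ?P2 = "ipc_eval (v(x := h2)) p"
  let ?Q1 = "ipc_eval (v(x := h1)) q" and ?Q2 = "ipc_eval (v(x := h2)) q"
  have "inf a (himp ?P1 ?Q1) = inf a (himp (inf a ?P1) (inf a ?Q1))" by (rule ha_imp_red)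
  also have "\<dots> = inf a (himp (inf a ?P2) (inf a ?Q2))" by (simp only: PImp.IH)
  also have "\<dots> = inf a (himp ?P2 ?Q2)" by (rule ha_imp_red[symmetric])
  finally show ?case by (simp only: ipc_eval.simps)
qed auto

lemma compat_mono:
  fixes f :: "'a::heyting_algebra \<Rightarrow> 'a"
  assumes "mono f" "polynomial f" "inf d x \<le> y"
  shows "inf d (f x) \<le> f y"
proof -
  obtain \<phi> x0 v where fe: "\<And>h. f h = ipc_eval (v(x0 := h)) \<phi>"
    using assms(2) unfolding polynomial_def by blast
  have "inf d x = inf d (inf x y)" using assms(3)
    by (intro antisym) (auto intro: le_infI1 le_infI2)
  then have "inf d (f x) = inf d (f (inf x y))" unfolding fe by (rule compat_eval)
  also have "\<dots> \<le> f (inf x y)" by simp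
  also have "\<dots> \<le> f y" using assms(1) by (simp add: monoD)
  finally show ?thesis .
qed

lemma iter_below_fix:
  fixes f :: "'a::order_bot \<Rightarrow> 'a"
  assumes "mono f" "f b = b"
  shows "(f ^^ i) bot \<le> b"
proof (induction i)
  case (Suc i)
  then have "f ((f ^^ i) bot) \<le> f b" using assms(1) by (simp add: monoD)
  then show ?case using assms(2) by simp
qed simp

lemma iter_chain:
  fixes f :: "'a::order_bot \<Rightarrow> 'a"
  assumes "mono f"
  shows "(f ^^ i) bot \<le> (f ^^ Suc i) bot"
proof (induction i)
  case (Suc i)
  then show ?case using assms by (simp add: monoD)
qed simp

lemma iter_le:
  fixes f k :: "'a::order_bot \<Rightarrow> 'a"
  assumes "mono f" "\<And>h. k h \<le> f h"
  shows "(k ^^ i) bot \<le> (f ^^ i) bot"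
proof (induction i)
  case (Suc i)
  have "k ((k ^^ i) bot) \<le> f ((k ^^ i) bot)" by (rule assms(2))
  also have "\<dots> \<le> f ((f ^^ i) bot)" using Suc assms(1) by (simp add: monoD)
  finally show ?case by simp
qed simp

theorem mainTheorem18:
  fixes f g :: "'a::heyting_algebra \<Rightarrow> 'a" and m n :: nat
  assumes "mono f" and "mono g"
    and "polynomial f" and "polynomial g"
    and "is_least_fixpoint f ((f ^^ m) bot)"
    and "is_least_fixpoint g ((g ^^ n) bot)"
  shows "is_least_fixpoint (\<lambda>h. inf (f h) (g h))
           (((\<lambda>h. inf (f h) (g h)) ^^ (m + n - 1)) bot)"
proof -
  define k where "k = (\<lambda>h. inf (f h) (g h))"
  have mk: "mono k" unfolding k_def using assms(1,2)
    by (auto simp: mono_def intro: le_infI1 le_infI2)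
  have P: "inf ((f ^^ i) bot) ((g ^^ j) bot) \<le> (k ^^ (i + j - 1)) bot" for i j
  proof (induction i arbitrary: j)
    case 0 then show ?case by simp
  next
    case (Suc i)
    note outer = Suc.IH
    show ?case
    proof (induction j)
      case 0 then show ?case by simp
    next
      case (Suc j)
      define a where "a = (k ^^ (i + j)) bot"
      have o: "inf ((g ^^ Suc j) bot) ((f ^^ i) bot) \<le> a"
        using outer[of "Suc j"] unfolding a_def by (simp add: inf_commute)
      have i: "inf ((f ^^ Suc i) bot) ((g ^^ j) bot) \<le> a"
        using Suc.IH unfolding a_def by simp
      have 1: "inf ((g ^^ Suc j) bot) (f ((f ^^ i) bot)) \<le> f a"
        by (rule compat_mono[OF assms(1,3) o])
      have 2: "inf ((f ^^ Suc i) bot) (g ((g ^^ j) bot)) \<le> g a"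
        by (rule compat_mono[OF assms(2,4) i])
      have "inf ((f ^^ Suc i) bot) ((g ^^ Suc j) bot) \<le> inf (f a) (g a)"
        using 1 2 by (auto simp: inf_commute intro: le_infI)
      then show ?case unfolding a_def k_def by simp
    qed
  qed
  have fm: "f ((f ^^ m) bot) = (f ^^ m) bot" using assms(5) unfolding is_least_fixpoint_def by simp
  have gn: "g ((g ^^ n) bot) = (g ^^ n) bot" using assms(6) unfolding is_least_fixpoint_def by simp
  have "(k ^^ (m + n)) bot \<le> (f ^^ (m + n)) bot"
    by (rule iter_le[OF assms(1)]) (simp add: k_def)
  also have "\<dots> \<le> (f ^^ m) bot" by (rule iter_below_fix[OF assms(1) fm])
  finally have A: "(k ^^ (m + n)) bot \<le> (f ^^ m) bot" .
  have "(k ^^ (m + n)) bot \<le> (g ^^ (m + n)) bot"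
    by (rule iter_le[OF assms(2)]) (simp add: k_def)
  also have "\<dots> \<le> (g ^^ n) bot" by (rule iter_below_fix[OF assms(2) gn])
  finally have B: "(k ^^ (m + n)) bot \<le> (g ^^ n) bot" .
  have up: "(k ^^ (m + n)) bot \<le> (k ^^ (m + n - 1)) bot"
    using A B P[of m n] by (meson le_inf_iff order_trans)
  have fx: "k ((k ^^ (m + n - 1)) bot) = (k ^^ (m + n - 1)) bot"
  proof (cases "m + n = 0")
    case True
    then have "m = 0" "n = 0" by auto
    then have "f bot = bot" using fm by simp
    then show ?thesis using True by (simp add: k_def)
  next
    case False
    then have e: "m + n = Suc (m + n - 1)" by simp
    have "k ((k ^^ (m + n - 1)) bot) = (k ^^ (m + n)) bot" by (subst e) simp
    then show ?thesis using up iter_chain[OF mk, of "m + n - 1"] e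
      by (metis antisym)
  qed
  show ?thesis unfolding k_def[symmetric] is_least_fixpoint_def
    using fx iter_below_fix[OF mk] by blast
qed

end
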